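(* Let $\alpha\in(0,1)$, $\psi(s)=s^{-\alpha}$ for $s>0$, $\psi(0)=0$, and $\Psi(s):=\frac{1}{1-\alpha}s^{1-\alpha}$. Let $\phi:[0,\infty)\to\mathbb{R}$ be a solution of $\ddot\phi(t)=-2\dot\phi(t)\psi(|\phi(t)|)$ with $\phi(0)>0$ and $\dot\phi(0)\in\mathbb{R}$. Then the following are equivalent: (1) there exists a time $t_0<\infty$ such that $\phi(t_0)=\dot\phi(t_0)=0$; (2) the initial data satisfy $\dot\phi(0)=-2\Psi(\phi(0))$.
   Context: This equation describes two particles $x_1,x_2$ on a line ($d=1$) governed by the Cucker–Smale system $\dot x_i=v_i$, $\dot v_i=\frac12\sum_{k=1}^2(v_k-v_i)\psi(|x_k-x_i|)$, normalized so that $x_1\equiv -x_2$, $v_1\equiv -v_2$, with $\phi=x_2-x_1$. A solution is understood in the piecewise weak sense: $\phi\in C^1([0,\infty))$, and on every compact subinterval of an interval between consecutive zeros (collision times) of $\phi$, $\phi$ belongs to $W^{2,1}$ and satisfies the equation weakly; once $\phi$ and $\dot\phi$ vanish simultaneously the particles are stuck and $\phi\equiv 0$ afterwards. *)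

theory Defs
  imports "HOL-Analysis.Analysis"
begin

definition psi :: "real \<Rightarrow> real \<Rightarrow> real" where
  "psi \<alpha> s = (if s > 0 then s powr (-\<alpha>) else 0)"

definition Psi :: "real \<Rightarrow> real \<Rightarrow> real" where
  "Psi \<alpha> s = s powr (1 - \<alpha>) / (1 - \<alpha>)"

text \<open>Piecewise weak solution of  phi'' = -2 phi' psi(|phi|)  on [0,inf),
  with dphi the derivative of phi:
  (i) phi is C^1 on [0,inf) with derivative dphi;
  (ii) on every compact interval [s,t] in [0,inf) free of zeros of phi
       (i.e. a compact subinterval of an interval between consecutive collision times),
       dphi is absolutely continuous with dphi'' = RHS, i.e.
       dphi t - dphi s = integral over [s,t] of -2 dphi psi(|phi|);
  (iii) once phi and dphi vanish simultaneously, phi stays 0.\<close>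
definition is_solution :: "real \<Rightarrow> (real \<Rightarrow> real) \<Rightarrow> (real \<Rightarrow> real) \<Rightarrow> bool" where
  "is_solution \<alpha> \<phi> d\<phi> \<longleftrightarrow>
     (\<forall>t\<ge>0. (\<phi> has_real_derivative d\<phi> t) (at t within {0..})) \<and>
     continuous_on {0..} d\<phi> \<and>
     (\<forall>s t. 0 \<le> s \<and> s \<le> t \<and> (\<forall>r\<in>{s..t}. \<phi> r \<noteq> 0) \<longrightarrow>
        ((\<lambda>r. -2 * d\<phi> r * psi \<alpha> \<bar>\<phi> r\<bar>) has_integral (d\<phi> t - d\<phi> s)) {s..t}) \<and>
     (\<forall>t\<ge>0. \<phi> t = 0 \<and> d\<phi> t = 0 \<longrightarrow> (\<forall>s\<ge>t. \<phi> s = 0))"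

end

theory Submission
  imports Defs
begin

lemma key:
  fixes g g' :: "real \<Rightarrow> real"
  assumes "s \<le> t" "\<alpha> < 1"
    and pos: "\<And>r. r \<in> {s..t} \<Longrightarrow> g r > 0"
    and der: "\<And>r. r \<in> {s..t} \<Longrightarrow> (g has_real_derivative g' r) (at r within {s..t})"
    and int: "((\<lambda>r. -2 * g' r * g r powr (-\<alpha>)) has_integral (g' t - g' s)) {s..t}"
  shows "g' t + 2 * Psi \<alpha> (g t) = g' s + 2 * Psi \<alpha> (g s)"
proof -
  have d: "((\<lambda>r. 2 * Psi \<alpha> (g r)) has_real_derivative (2 * g' r * g r powr (-\<alpha>))) (at r within {s..t})"
    if r: "r \<in> {s..t}" for r
  proof -
    have "((\<lambda>r. 2 * (g r powr (1 - \<alpha>) / (1 - \<alpha>))) has_real_derivative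
       2 * ((1 - \<alpha>) * g r powr (1 - \<alpha> - 1) * g' r / (1 - \<alpha>))) (at r within {s..t})"
      by (auto intro!: derivative_eq_intros der r pos[OF r])
    moreover have "2 * ((1 - \<alpha>) * g r powr (1 - \<alpha> - 1) * g' r / (1 - \<alpha>)) = 2 * g' r * g r powr (-\<alpha>)"
      using assms(2) by (simp add: field_simps)
    ultimately show ?thesis unfolding Psi_def by (simp add: mult.assoc)
  qed
  have i2: "((\<lambda>r. 2 * g' r * g r powr (-\<alpha>)) has_integral (2 * Psi \<alpha> (g t) - 2 * Psi \<alpha> (g s))) {s..t}"
    by (rule fundamental_theorem_of_calculus[OF assms(1)])
       (use d in \<open>auto simp: has_real_derivative_iff_has_vector_derivative\<close>)
  have "((\<lambda>r. -2 * g' r * g r powr (-\<alpha>) + 2 * g' r * g r powr (-\<alpha>)) has_integral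
        ((g' t - g' s) + (2 * Psi \<alpha> (g t) - 2 * Psi \<alpha> (g s)))) {s..t}"
    by (rule has_integral_add[OF int i2])
  then have "((\<lambda>r. 0) has_integral ((g' t - g' s) + (2 * Psi \<alpha> (g t) - 2 * Psi \<alpha> (g s)))) {s..t}"
    by simp
  then have "(g' t - g' s) + (2 * Psi \<alpha> (g t) - 2 * Psi \<alpha> (g s)) = 0"
    using has_integral_0 has_integral_unique by blast
  then show ?thesis by simp
qed

definition GG :: "real \<Rightarrow> real \<Rightarrow> real" where
  "GG \<alpha> x = (if x \<le> 0 then -(2 * Psi \<alpha> (-x)) else 2 * Psi \<alpha> x)"

lemma GG_0[simp]: "GG \<alpha> 0 = 0"
  by (simp add: GG_def Psi_def)

lemma contGG: assumes "\<alpha> < 1" shows "continuous_on UNIV (GG \<alpha>)"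
proof -
  have "continuous_on UNIV (\<lambda>x. if x \<le> 0 then -(2 * ((-x) powr (1-\<alpha>) / (1 - \<alpha>))) else 2 * (x powr (1-\<alpha>) / (1 - \<alpha>)))"
  proof (rule continuous_on_cases_le)
    have "continuous_on {x \<in> UNIV. x \<le> 0} (\<lambda>x. (-x) powr (1-\<alpha>))"
      by (rule continuous_on_powr') (use assms in \<open>auto intro!: continuous_on_minus continuous_on_id continuous_on_const\<close>)
    then show "continuous_on {x \<in> UNIV. x \<le> 0} (\<lambda>x. -(2 * ((-x) powr (1-\<alpha>) / (1 - \<alpha>))))"
      by (intro continuous_on_minus continuous_on_mult_left continuous_on_divide continuous_on_const) (use assms in auto)
    have "continuous_on {x \<in> UNIV. 0 \<le> x} (\<lambda>x. x powr (1-\<alpha>))"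
      by (rule continuous_on_powr') (use assms in \<open>auto intro!: continuous_on_id continuous_on_const\<close>)
    then show "continuous_on {x \<in> UNIV. 0 \<le> x} (\<lambda>x. 2 * (x powr (1-\<alpha>) / (1 - \<alpha>)))"
      by (intro continuous_on_mult_left continuous_on_divide continuous_on_const) (use assms in auto)
  qed (auto intro: continuous_on_id)
  then show ?thesis unfolding GG_def Psi_def by simp
qed

lemma sol_cont: "is_solution \<alpha> \<phi> d\<phi> \<Longrightarrow> continuous_on {0..} \<phi>"
proof -
  assume "is_solution \<alpha> \<phi> d\<phi>"
  then have "\<And>t. t \<in> {0..} \<Longrightarrow> (\<phi> has_real_derivative d\<phi> t) (at t within {0..})"
    unfolding is_solution_def by auto
  then show ?thesis
    unfolding continuous_on_eq_continuous_within by (intro ballI DERIV_continuous) auto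
qed

lemma Econst:
  assumes sol: "is_solution \<alpha> \<phi> d\<phi>" and "\<alpha> < 1" and "0 \<le> s" "s \<le> t"
    and nz: "\<And>r. r \<in> {s..t} \<Longrightarrow> \<phi> r \<noteq> 0"
  shows "d\<phi> t + GG \<alpha> (\<phi> t) = d\<phi> s + GG \<alpha> (\<phi> s)"
proof -
  have der0: "\<And>r. r \<ge> 0 \<Longrightarrow> (\<phi> has_real_derivative d\<phi> r) (at r within {0..})"
    and int: "((\<lambda>r. -2 * d\<phi> r * psi \<alpha> \<bar>\<phi> r\<bar>) has_integral (d\<phi> t - d\<phi> s)) {s..t}"
  proof -
    show "\<And>r. r \<ge> 0 \<Longrightarrow> (\<phi> has_real_derivative d\<phi> r) (at r within {0..})"
      using sol unfolding is_solution_def by blast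
    have "\<forall>s t. 0 \<le> s \<and> s \<le> t \<and> (\<forall>r\<in>{s..t}. \<phi> r \<noteq> 0) \<longrightarrow>
        ((\<lambda>r. -2 * d\<phi> r * psi \<alpha> \<bar>\<phi> r\<bar>) has_integral (d\<phi> t - d\<phi> s)) {s..t}"
      using sol unfolding is_solution_def by blast
    then show "((\<lambda>r. -2 * d\<phi> r * psi \<alpha> \<bar>\<phi> r\<bar>) has_integral (d\<phi> t - d\<phi> s)) {s..t}"
      using assms(3,4) nz by blast
  qed
  have der: "\<And>r. r \<in> {s..t} \<Longrightarrow> (\<phi> has_real_derivative d\<phi> r) (at r within {s..t})"
  proof -
    fix r assume r: "r \<in> {s..t}"
    show "(\<phi> has_real_derivative d\<phi> r) (at r within {s..t})"
      by (rule DERIV_subset[OF der0]) (use r assms(3) in auto)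
  qed
  have cont: "continuous_on {s..t} \<phi>"
    by (rule continuous_on_subset[OF sol_cont[OF sol]]) (use assms(3) in auto)
  show ?thesis
  proof (cases "\<phi> s > 0")
    case True
    have pos: "\<phi> r > 0" if "r \<in> {s..t}" for r
    proof (rule ccontr)
      assume "\<not> \<phi> r > 0"
      then have "\<phi> r \<le> 0" by simp
      have "continuous_on {s..r} \<phi>" by (rule continuous_on_subset[OF cont]) (use that in auto)
      with IVT2'[of \<phi> r 0 s, OF \<open>\<phi> r \<le> 0\<close>] True that
      obtain x where "s \<le> x" "x \<le> r" "\<phi> x = 0"
        by fastforce
      with nz that show False by auto
    qed
    have "((\<lambda>r. -2 * d\<phi> r * \<phi> r powr (-\<alpha>)) has_integral (d\<phi> t - d\<phi> s)) {s..t}"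
      by (rule has_integral_eq[OF _ int]) (use pos in \<open>force simp: psi_def\<close>)
    from key[OF assms(4) assms(2) pos der this] show ?thesis
      using pos[of s] pos[of t] assms(4) by (simp add: GG_def)
  next
    case False
    then have "\<phi> s < 0" using nz[of s] assms(4) by force
    have neg: "- \<phi> r > 0" if "r \<in> {s..t}" for r
    proof (rule ccontr)
      assume "\<not> - \<phi> r > 0"
      then have "\<phi> r \<ge> 0" by simp
      have "continuous_on {s..r} \<phi>" by (rule continuous_on_subset[OF cont]) (use that in auto)
      with IVT'[of \<phi> s 0 r, OF _ \<open>\<phi> r \<ge> 0\<close>] \<open>\<phi> s < 0\<close> that
      obtain x where "s \<le> x" "x \<le> r" "\<phi> x = 0"
        by fastforce
      with nz that show False by auto
    qed
    have derm: "\<And>r. r \<in> {s..t} \<Longrightarrow> ((\<lambda>r. - \<phi> r) has_real_derivative - d\<phi> r) (at r within {s..t})"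
      using der by (auto intro: derivative_intros)
    have "((\<lambda>r. -2 * (- d\<phi> r) * (- \<phi> r) powr (-\<alpha>)) has_integral (-(d\<phi> t - d\<phi> s))) {s..t}"
      by (rule has_integral_eq[OF _ has_integral_neg[OF int]]) (use neg in \<open>force simp: psi_def\<close>)
    then have "((\<lambda>r. -2 * (- d\<phi> r) * (- \<phi> r) powr (-\<alpha>)) has_integral ((- d\<phi> t) - (- d\<phi> s))) {s..t}"
      by simp
    from key[OF assms(4) assms(2) neg derm this] show ?thesis
      using neg[of s] neg[of t] assms(4) by (simp add: GG_def)
  qed
qed




lemma contE:
  assumes sol: "is_solution \<alpha> \<phi> d\<phi>" and a: "\<alpha> < 1"
  shows "continuous_on {0..} (\<lambda>t. d\<phi> t + GG \<alpha> (\<phi> t))"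
proof -
  have "continuous_on {0..} d\<phi>" using sol unfolding is_solution_def by blast
  moreover have "continuous_on {0..} (\<lambda>t. GG \<alpha> (\<phi> t))"
    by (rule continuous_on_compose2[OF contGG[OF a] sol_cont[OF sol]]) auto
  ultimately show ?thesis by (rule continuous_on_add)
qed

lemma localL:
  assumes sol: "is_solution \<alpha> \<phi> d\<phi>" and a: "\<alpha> < 1" and u: "u \<ge> 0"
    and nd: "\<phi> u = 0 \<longrightarrow> d\<phi> u \<noteq> 0"
  shows "\<exists>\<delta>>0. \<forall>t\<in>{u..u+\<delta>}. d\<phi> t + GG \<alpha> (\<phi> t) = d\<phi> u + GG \<alpha> (\<phi> u)"
proof -
  define E where "E t = d\<phi> t + GG \<alpha> (\<phi> t)" for t
  have der0: "\<And>r. r \<ge> 0 \<Longrightarrow> (\<phi> has_real_derivative d\<phi> r) (at r within {0..})"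
    using sol unfolding is_solution_def by blast
  obtain \<delta>0 where d0: "\<delta>0 > 0" and nz: "\<And>h. 0 < h \<Longrightarrow> h < \<delta>0 \<Longrightarrow> \<phi> (u + h) \<noteq> 0"
  proof (cases "\<phi> u = 0")
    case True
    with nd have "d\<phi> u \<noteq> 0" by simp
    show ?thesis
    proof (cases "d\<phi> u > 0")
      case True
      from has_real_derivative_pos_inc_right[OF der0[OF u] True] \<open>\<phi> u = 0\<close> u
      show ?thesis using that by force
    next
      case False
      with \<open>d\<phi> u \<noteq> 0\<close> have "d\<phi> u < 0" by simp
      from has_real_derivative_neg_dec_right[OF der0[OF u] this] \<open>\<phi> u = 0\<close> u
      show ?thesis using that by force
    qed
  next
    case False
    have "continuous_on {0..} \<phi>" by (rule sol_cont[OF sol])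
    then have "\<forall>e>0. \<exists>d>0. \<forall>x'\<in>{0..}. dist x' u < d \<longrightarrow> dist (\<phi> x') (\<phi> u) < e"
      using u unfolding continuous_on_iff by auto
    then obtain d where d: "d > 0" "\<And>x'. x' \<in> {0..} \<Longrightarrow> dist x' u < d \<Longrightarrow> dist (\<phi> x') (\<phi> u) < \<bar>\<phi> u\<bar>"
      using False by (meson zero_less_abs_iff)
    show ?thesis
    proof (rule that[OF d(1)])
      fix h :: real assume "0 < h" "h < d"
      then have "dist (\<phi> (u+h)) (\<phi> u) < \<bar>\<phi> u\<bar>" using d(2)[of "u+h"] u by (simp add: dist_real_def)
      then show "\<phi> (u + h) \<noteq> 0" by (auto simp: dist_real_def)
    qed
  qed
  define d where "d = \<delta>0 / 2"
  have dpos: "d > 0" and dlt: "d < \<delta>0" using d0 by (auto simp: d_def)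
  have Ed: "E t = E (u + d)" if t: "t \<in> {u<..u+d}" for t
  proof -
    have "E (u + d) = E t"
      unfolding E_def
    proof (rule Econst[OF sol a])
      show "0 \<le> t" "t \<le> u + d" using t u by auto
      fix r assume "r \<in> {t..u+d}"
      then have "0 < r - u" "r - u < \<delta>0" using t dlt by auto
      from nz[OF this] show "\<phi> r \<noteq> 0" by simp
    qed
    then show ?thesis by simp
  qed
  have cE: "continuous_on (closure {u<..u+d}) E"
    unfolding closure_greaterThanAtMost[OF less_add_same_cancel1[THEN iffD2, OF dpos]]
    by (rule continuous_on_subset[OF contE[OF sol a, folded E_def]]) (use u in auto)
  have ucl: "u \<in> closure {u<..u+d}"
  proof -
    have "closure {u<..u+d} = {u..u+d}" by (rule closure_greaterThanAtMost) (use dpos in linarith)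
    moreover have "u \<in> {u..u+d}" using dpos by simp
    ultimately show ?thesis by (simp only:)
  qed
  have Eu: "E u = E (u + d)"
    by (rule continuous_constant_on_closure[OF cE Ed ucl])
  show ?thesis
  proof (intro exI[of _ d] conjI ballI dpos)
    fix t assume "t \<in> {u..u+d}"
    then have "t = u \<or> t \<in> {u<..u+d}" by auto
    then have "E t = E u"
    proof
      assume "t \<in> {u<..u+d}"
      from Ed[OF this] Eu show "E t = E u" by simp
    qed simp
    then show "d\<phi> t + GG \<alpha> (\<phi> t) = d\<phi> u + GG \<alpha> (\<phi> u)"
      unfolding E_def .
  qed
qed


lemma globalM:
  assumes sol: "is_solution \<alpha> \<phi> d\<phi>" and a: "\<alpha> < 1"
  shows "(\<forall>t\<ge>0. d\<phi> t + GG \<alpha> (\<phi> t) = d\<phi> 0 + GG \<alpha> (\<phi> 0)) \<or>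
         (\<exists>u\<ge>0. \<phi> u = 0 \<and> d\<phi> u = 0 \<and> d\<phi> u + GG \<alpha> (\<phi> u) = d\<phi> 0 + GG \<alpha> (\<phi> 0))"
proof (rule disjCI)
  define E where "E t = d\<phi> t + GG \<alpha> (\<phi> t)" for t
  assume nd: "\<not> (\<exists>u\<ge>0. \<phi> u = 0 \<and> d\<phi> u = 0 \<and> d\<phi> u + GG \<alpha> (\<phi> u) = d\<phi> 0 + GG \<alpha> (\<phi> 0))"
  show "\<forall>t\<ge>0. d\<phi> t + GG \<alpha> (\<phi> t) = d\<phi> 0 + GG \<alpha> (\<phi> 0)"
  proof (rule ccontr)
    assume "\<not> (\<forall>t\<ge>0. d\<phi> t + GG \<alpha> (\<phi> t) = d\<phi> 0 + GG \<alpha> (\<phi> 0))"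
    then obtain b where b: "b \<ge> 0" "E b \<noteq> E 0" unfolding E_def by auto
    define B where "B = {t. 0 \<le> t \<and> E t \<noteq> E 0}"
    define u where "u = Inf B"
    have Bne: "B \<noteq> {}" using b unfolding B_def by auto
    have bdd: "bdd_below B" unfolding B_def by (rule bdd_belowI[of _ 0]) auto
    have u0: "u \<ge> 0" unfolding u_def by (rule cInf_greatest[OF Bne]) (auto simp: B_def)
    have lowB: "u \<le> x" if "x \<in> B" for x unfolding u_def by (rule cInf_lower[OF that bdd])
    have before: "E t = E 0" if "0 \<le> t" "t < u" for t
    proof (rule ccontr)
      assume "E t \<noteq> E 0"
      then have "t \<in> B" using that unfolding B_def by auto
      from lowB[OF this] that show False by simp
    qed
    have Eu: "E u = E 0"
    proof (cases "u = 0")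
      case False
      with u0 have upos: "0 < u" by simp
      have cl: "closure {0..<u} = {0..u}" by (rule closure_atLeastLessThan) (use upos in simp)
      have "continuous_on (closure {0..<u}) E"
        unfolding cl by (rule continuous_on_subset[OF contE[OF sol a, folded E_def]]) auto
      moreover have "u \<in> closure {0..<u}" unfolding cl using upos by simp
      moreover have "\<And>x. x \<in> {0..<u} \<Longrightarrow> E x = E 0"
      proof -
        fix x assume "x \<in> {0..<u}"
        then have "0 \<le> x" "x < u" by simp_all
        then show "E x = E 0" by (rule before)
      qed
      ultimately show ?thesis
        using continuous_constant_on_closure[of "{0..<u}" E "E 0" u] by blast
    qed simp
    have "\<not> (\<phi> u = 0 \<and> d\<phi> u = 0)"
    proof
      assume "\<phi> u = 0 \<and> d\<phi> u = 0"
      with u0 Eu have "\<exists>u\<ge>0. \<phi> u = 0 \<and> d\<phi> u = 0 \<and> d\<phi> u + GG \<alpha> (\<phi> u) = d\<phi> 0 + GG \<alpha> (\<phi> 0)"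
        unfolding E_def by blast
      with nd show False by simp
    qed
    then have "\<phi> u = 0 \<longrightarrow> d\<phi> u \<noteq> 0" by blast
    from localL[OF sol a u0 this] obtain \<delta> where dp: "\<delta> > 0"
      and dc: "\<And>t. t\<in>{u..u+\<delta>} \<Longrightarrow> E t = E u" unfolding E_def by blast
    have "u + \<delta> \<le> u"
    proof -
      have "u + \<delta> \<le> Inf B"
      proof (rule cInf_greatest[OF Bne])
        fix x assume x: "x \<in> B"
        have "u \<le> x" by (rule lowB[OF x])
        moreover have "E x \<noteq> E u" using x Eu unfolding B_def by auto
        ultimately show "u + \<delta> \<le> x" using dc[of x] by force
      qed
      then show ?thesis unfolding u_def .
    qed
    with dp show False by simp
  qed
qed

theorem proposition3p1:
  fixes \<alpha> :: real and \<phi> d\<phi> :: "real \<Rightarrow> real"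
  assumes "0 < \<alpha>" and "\<alpha> < 1"
    and "is_solution \<alpha> \<phi> d\<phi>"
    and "\<phi> 0 > 0"
  shows "(\<exists>t0\<ge>0. \<phi> t0 = 0 \<and> d\<phi> t0 = 0) \<longleftrightarrow> d\<phi> 0 = -2 * Psi \<alpha> (\<phi> 0)"
proof -
  note sol = assms(3) and a = assms(2)
  define E where "E t = d\<phi> t + GG \<alpha> (\<phi> t)" for t
  have E0: "E 0 = d\<phi> 0 + 2 * Psi \<alpha> (\<phi> 0)" using assms(4) by (simp add: E_def GG_def)
  have M: "(\<forall>t\<ge>0. E t = E 0) \<or> (\<exists>u\<ge>0. \<phi> u = 0 \<and> d\<phi> u = 0 \<and> E u = E 0)"
    using globalM[OF sol a] unfolding E_def .
  show ?thesis
  proof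
    assume "\<exists>t0\<ge>0. \<phi> t0 = 0 \<and> d\<phi> t0 = 0"
    then obtain t0 where t0: "t0 \<ge> 0" "\<phi> t0 = 0" "d\<phi> t0 = 0" by blast
    have "E 0 = 0"
      using M
    proof
      assume "\<forall>t\<ge>0. E t = E 0"
      then have "E t0 = E 0" using t0(1) by blast
      then show "E 0 = 0" using t0 by (simp add: E_def)
    next
      assume "\<exists>u\<ge>0. \<phi> u = 0 \<and> d\<phi> u = 0 \<and> E u = E 0"
      then show "E 0 = 0" by (auto simp: E_def)
    qed
    then show "d\<phi> 0 = -2 * Psi \<alpha> (\<phi> 0)" using E0 by simp
  next
    assume h: "d\<phi> 0 = -2 * Psi \<alpha> (\<phi> 0)"
    then have Ez: "E 0 = 0" using E0 by simp
    show "\<exists>t0\<ge>0. \<phi> t0 = 0 \<and> d\<phi> t0 = 0"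
      using M
    proof
      assume "\<exists>u\<ge>0. \<phi> u = 0 \<and> d\<phi> u = 0 \<and> E u = E 0"
      then show ?thesis by blast
    next
      assume all: "\<forall>t\<ge>0. E t = E 0"
      show ?thesis
      proof (rule ccontr)
        assume nz0: "\<not> ?thesis"
        have nz: "\<phi> t \<noteq> 0" if "t \<ge> 0" for t
        proof
          assume "\<phi> t = 0"
          moreover have "E t = 0" using all[rule_format, OF that] Ez by simp
          ultimately have "d\<phi> t = 0" by (simp add: E_def)
          with \<open>\<phi> t = 0\<close> nz0 that show False by blast
        qed
        have cont: "continuous_on {0..} \<phi>" by (rule sol_cont[OF sol])
        have pos: "\<phi> t > 0" if "t \<ge> 0" for t
        proof (rule ccontr)
          assume "\<not> \<phi> t > 0"
          then have "\<phi> t \<le> 0" by simp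
          have "continuous_on {0..t} \<phi>" by (rule continuous_on_subset[OF cont]) auto
          with IVT2'[of \<phi> t 0 0, OF \<open>\<phi> t \<le> 0\<close>] assms(4) that
          obtain x where "0 \<le> x" "x \<le> t" "\<phi> x = 0" by fastforce
          with nz show False by auto
        qed
        have dphi: "d\<phi> t = -2 * Psi \<alpha> (\<phi> t)" if "t \<ge> 0" for t
        proof -
          have "E t = 0" using all[rule_format, OF that] Ez by simp
          then show ?thesis using pos[OF that] by (simp add: E_def GG_def)
        qed
        define k where "k = 2 * \<alpha> / (1 - \<alpha>)"
        have kpos: "k > 0" using assms(1,2) by (simp add: k_def)
        have der0: "\<And>r. r \<ge> 0 \<Longrightarrow> (\<phi> has_real_derivative d\<phi> r) (at r within {0..})"
          using sol unfolding is_solution_def by blast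
        have fder: "((\<lambda>t. \<phi> t powr \<alpha>) has_real_derivative (-k)) (at t within {0..})" if t: "t \<ge> 0" for t
        proof -
          have "((\<lambda>t. \<phi> t powr \<alpha>) has_real_derivative (\<alpha> * \<phi> t powr (\<alpha> - 1) * d\<phi> t)) (at t within {0..})"
            by (auto intro!: derivative_eq_intros der0 t pos[OF t])
          moreover have "\<alpha> * \<phi> t powr (\<alpha> - 1) * d\<phi> t = -k"
          proof -
            have "\<phi> t powr (\<alpha> - 1) * \<phi> t powr (1 - \<alpha>) = 1"
              using pos[OF t] by (simp add: powr_add[symmetric])
            then show ?thesis using assms(2) unfolding dphi[OF t] k_def Psi_def
              by (simp add: field_simps)
          qed
          ultimately show ?thesis by simp
        qed
        define T where "T = \<phi> 0 powr \<alpha> / k + 1"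
        have T0: "T \<ge> 0" using kpos by (simp add: T_def)
        have "\<exists>x\<in>{0..T}. \<phi> T powr \<alpha> - \<phi> 0 powr \<alpha> = (\<lambda>h. (-k) * h) (T - 0)"
        proof (rule mvt_very_simple[OF T0])
          fix x assume "0 \<le> x" "x \<le> T"
          have "((\<lambda>t. \<phi> t powr \<alpha>) has_real_derivative (-k)) (at x within {0..T})"
            by (rule DERIV_subset[OF fder]) (use \<open>0 \<le> x\<close> in auto)
          then show "((\<lambda>t. \<phi> t powr \<alpha>) has_derivative (\<lambda>h. (-k) * h)) (at x within {0..T})"
            unfolding has_field_derivative_def .
        qed
        then have "\<phi> T powr \<alpha> = \<phi> 0 powr \<alpha> - k * T" by simp
        also have "\<dots> = -k" using kpos by (simp add: T_def field_simps)
        finally have "\<phi> T powr \<alpha> < 0" using kpos by simp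
        moreover have "\<phi> T powr \<alpha> \<ge> 0" by simp
        ultimately show False by simp
      qed
    qed
  qed
qed

end
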